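(* Let $s(x)=\sum_{n\ge0}s_nx^n\in\mathbb{R}[[x]]$ with $s_0=1$, and let $t(x)=1/s(x)=\sum_{n\ge0}t_nx^n$. Set $s_n=t_n=0$ for $n<0$. Then for all $M,N\in\mathbb{N}$, $$\det(s_{i+j-M})_{i,j=0}^{N+M}=(-1)^{N+\binom{M+1}{2}}\det(t_{i+j+M+2})_{i,j=0}^{N-1},$$ where the determinant of a $0\times 0$ matrix is $1$.
   Context: $\mathbb{N}=\{0,1,2,\dots\}$. *)

theory Defs
  imports "HOL-Computational_Algebra.Formal_Power_Series" "Jordan_Normal_Form.Determinant"
begin

definition zcoeff :: "'a::zero fps \<Rightarrow> int \<Rightarrow> 'a" where
  "zcoeff f k = (if k < 0 then 0 else fps_nth f (nat k))"

end

theory Submission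
  imports Defs
begin
lemma det_rev_first_cols:
  fixes A :: "'a::comm_ring_1 mat"
  assumes "A \<in> carrier_mat m m" "n \<le> m"
  shows "det (mat m m (\<lambda>(i,j). A $$ (i, if j < n then n - 1 - j else j))) = (-1)^(n choose 2) * det A"
  using assms
proof (induction n arbitrary: A)
  case 0
  have "mat m m (\<lambda>(i,j). A $$ (i, if j < 0 then 0 - 1 - j else j)) = A"
    using 0 by (intro eq_matI) auto
  then show ?case by (simp only:) (simp add: numeral_2_eq_2)
next
  case (Suc n)
  define B where "B = mat m m (\<lambda>(i,j). A $$ (i, if j < Suc n then Suc n - 1 - j else j))"
  have Bc: "B \<in> carrier_mat m m" unfolding B_def by simp
  have "det B = (-1)^(1*n) * det (mat m m (\<lambda>(i, j). B $$ (i, if j < n then j + 1 else if j < 1 + n then j - n else j)))"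
    by (rule det_swap_initial_cols[OF Bc]) (use Suc in simp)
  also have "mat m m (\<lambda>(i, j). B $$ (i, if j < n then j + 1 else if j < 1 + n then j - n else j))
    = mat m m (\<lambda>(i,j). A $$ (i, if j < n then n - 1 - j else j))"
    using Suc.prems unfolding B_def by (intro eq_matI) (auto simp: less_Suc_eq)
  also have "det \<dots> = (-1)^(n choose 2) * det A" using Suc by simp
  finally have "det B = (-1)^(n + (n choose 2)) * det A" by (simp add: power_add)
  moreover have "Suc n choose 2 = n + (n choose 2)"
    using binomial_Suc_Suc[of n 1] by (simp add: numeral_2_eq_2)
  ultimately show ?case unfolding B_def by simp
qed

lemma det_rev_cols:
  fixes A :: "'a::comm_ring_1 mat"
  assumes "A \<in> carrier_mat m m"
  shows "det (mat m m (\<lambda>(i,j). A $$ (i, m - 1 - j))) = (-1)^(m choose 2) * det A"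
proof -
  have "mat m m (\<lambda>(i,j). A $$ (i, m - 1 - j)) = mat m m (\<lambda>(i,j). A $$ (i, if j < m then m - 1 - j else j))"
    by (intro eq_matI) auto
  then show ?thesis using det_rev_first_cols[OF assms order_refl] by simp
qed

lemma conv:
  fixes s :: "real fps"
  assumes s0: "fps_nth s 0 = 1" and "i < L" "j < L"
  shows "(\<Sum>k<L. zcoeff s (int i - int k) * zcoeff (inverse s) (int k - int j)) = (if i = j then 1 else 0)"
proof (cases "j \<le> i")
  case False
  then show ?thesis by (intro trans[OF sum.neutral]) (auto simp: zcoeff_def)
next
  case True
  define d where "d = i - j"
  let ?f = "\<lambda>k. zcoeff s (int i - int k) * zcoeff (inverse s) (int k - int j)"
  have "(\<Sum>k<L. ?f k) = (\<Sum>k\<in>{j..i}. ?f k)"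
    by (rule sum.mono_neutral_right) (use assms in \<open>auto simp: zcoeff_def\<close>)
  also have "\<dots> = (\<Sum>m\<in>{0+j..d+j}. ?f m)" using True by (simp add: d_def)
  also have "\<dots> = (\<Sum>m\<in>{0..d}. ?f (m + j))" by (rule sum.shift_bounds_cl_nat_ivl)
  also have "\<dots> = (\<Sum>m\<in>{0..d}. fps_nth (inverse s) m * fps_nth s (d - m))"
  proof (intro sum.cong refl)
    fix m assume "m \<in> {0..d}"
    then have "m \<le> d" by simp
    then have e1: "int i - int (m + j) = int (d - m)" and e2: "int (m + j) - int j = int m"
      using True by (auto simp: d_def)
    show "?f (m + j) = fps_nth (inverse s) m * fps_nth s (d - m)"
      unfolding e1 e2 by (simp add: zcoeff_def)
  qed
  also have "\<dots> = fps_nth (inverse s * s) d" by (simp add: fps_mult_nth)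
  also have "inverse s * s = 1" using inverse_mult_eq_1'[of s] s0 by (simp add: mult.commute)
  finally show ?thesis using True by (auto simp: d_def)
qed

lemma choose2_Suc: "Suc n choose 2 = n + (n choose 2)"
  using binomial_Suc_Suc[of n 1] by (simp add: numeral_2_eq_2)

lemma choose2_add: "(a + b) choose 2 = (a choose 2) + (b choose 2) + a * b"
  by (induction a) (simp_all add: choose2_Suc)

lemma sign_eq:
  fixes N M :: nat
  shows "(-1::real) ^ ((N+M+1) * N + ((N+M+1) choose 2) + (N choose 2)) = (-1) ^ (N + ((M + 1) choose 2))"
proof -
  have "(N+M+1) * N + ((N+M+1) choose 2) + (N choose 2) = (N + ((M + 1) choose 2)) + 2 * (2 * (N choose 2) + N * (M + 1))"
  proof -
    have "(N+M+1) choose 2 = (N choose 2) + ((M+1) choose 2) + N * (M+1)"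
      using choose2_add[of N "M+1"] by (simp add: add.assoc)
    moreover have "N * N = N + 2 * (N choose 2)"
      by (induction N) (auto simp: choose2_Suc algebra_simps)
    ultimately show ?thesis by (simp add: algebra_simps)
  qed
  then have "(-1::real) ^ ((N+M+1) * N + ((N+M+1) choose 2) + (N choose 2)) = (-1) ^ ((N + ((M + 1) choose 2)) + 2 * (2 * (N choose 2) + N * (M + 1)))"
    by (simp only:)
  also have "\<dots> = (-1) ^ (N + ((M + 1) choose 2))"
    by (simp only: power_add power_mult) simp
  finally show ?thesis .
qed

theorem lemma2p1:
  fixes s :: "real fps" and M N :: nat
  assumes "fps_nth s 0 = 1"
  shows "det (mat (N + M + 1) (N + M + 1) (\<lambda>(i, j). zcoeff s (int i + int j - int M)))
       = (-1) ^ (N + ((M + 1) choose 2))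
         * det (mat N N (\<lambda>(i, j). zcoeff (inverse s) (int i + int j + int M + 2)))"
proof -
  define n where "n = N + M + 1"
  define L where "L = N + n"
  define t where "t = inverse s"
  define S where "S = mat L L (\<lambda>(i,j). zcoeff s (int i - int j))"
  define P where "P = mat L L (\<lambda>(i,j). if j < N then zcoeff t (int i - int j) else if i + j = L - 1 then 1 else (0::real))"
  define H where "H = mat n n (\<lambda>(i, j). zcoeff s (int i + int j - int M))"
  define G where "G = mat N N (\<lambda>(i, j). zcoeff t (int i + int j + int M + 2))"
  have Sc: "S \<in> carrier_mat L L" and Pc: "P \<in> carrier_mat L L" and Hc: "H \<in> carrier_mat n n"
    and Gc: "G \<in> carrier_mat N N" unfolding S_def P_def H_def G_def by auto
  have detS: "det S = 1"
  proof -
    have "det S = prod_list (diag_mat S)"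
      by (rule det_lower_triangular[OF _ Sc]) (auto simp: S_def zcoeff_def)
    also have "diag_mat S = replicate L 1"
      by (rule nth_equalityI) (auto simp: diag_mat_def S_def zcoeff_def assms)
    finally show ?thesis by simp
  qed
  have SP: "(S * P) $$ (i, j) = (if j < N then (if i = j then 1 else 0) else zcoeff s (int i + int j + 1 - int L))"
    if ij: "i < L" "j < L" for i j
  proof -
    have "(S * P) $$ (i, j) = (\<Sum>k<L. S $$ (i, k) * P $$ (k, j))"
      using ij Sc Pc by (simp add: scalar_prod_def lessThan_atLeast0 S_def P_def)
    also have "\<dots> = (if j < N then (if i = j then 1 else 0) else zcoeff s (int i + int j + 1 - int L))"
    proof (cases "j < N")
      case True
      have "(\<Sum>k<L. S $$ (i, k) * P $$ (k, j)) = (\<Sum>k<L. zcoeff s (int i - int k) * zcoeff (inverse s) (int k - int j))"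
        using ij True by (intro sum.cong) (auto simp: S_def P_def t_def)
      also have "\<dots> = (if i = j then 1 else 0)" by (rule conv[OF assms ij])
      finally show ?thesis using True by simp
    next
      case False
      have "(\<Sum>k<L. S $$ (i, k) * P $$ (k, j)) = (\<Sum>k<L. if k = L - 1 - j then zcoeff s (int i - int k) else 0)"
        using ij False by (intro sum.cong) (auto simp: S_def P_def)
      also have "\<dots> = zcoeff s (int i - int (L - 1 - j))" using ij by simp
      also have "int i - int (L - 1 - j) = int i + int j + 1 - int L" using ij by simp
      finally show ?thesis using False by simp
    qed
    finally show ?thesis .
  qed
  define Y where "Y = mat N n (\<lambda>(i,j). (S * P) $$ (i, j + N))"
  have SPblock: "S * P = four_block_mat (1\<^sub>m N) Y (0\<^sub>m n N) H"
  proof (rule eq_matI)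
    fix i j assume ij: "i < dim_row (four_block_mat (1\<^sub>m N) Y (0\<^sub>m n N) H)" "j < dim_col (four_block_mat (1\<^sub>m N) Y (0\<^sub>m n N) H)"
    then have ij': "i < L" "j < L" using Hc by (auto simp: L_def Y_def)
    show "(S * P) $$ (i, j) = four_block_mat (1\<^sub>m N) Y (0\<^sub>m n N) H $$ (i, j)"
    proof (cases "i < N \<or> j < N")
      case True
      then show ?thesis
        unfolding SP[OF ij'] using ij ij' Hc by (auto simp: Y_def H_def SP L_def n_def)
    next
      case False
      have e: "int i + int j + 1 - int L = int (i - N) + int (j - N) - int M"
        using False by (simp add: L_def n_def)
      show ?thesis
        unfolding SP[OF ij'] e using ij ij' Hc False by (simp add: H_def L_def n_def)
    qed
  qed (use Sc Pc Hc in \<open>auto simp: Y_def L_def\<close>)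
  have detSP: "det (S * P) = det H"
    unfolding SPblock
    by (subst det_four_block_mat_lower_left_zero[of _ N _ n]) (auto simp: Y_def H_def)
  define Q where "Q = mat (n + N) (n + N) (\<lambda>(i,j). P $$ (i, if j < n then j + N else j - n))"
  have Pc': "P \<in> carrier_mat (n + N) (n + N)" using Pc by (simp add: L_def add.commute)
  have detP: "det P = (-1)^(n * N) * det Q"
    unfolding Q_def by (rule det_swap_cols[OF Pc'])
  define J where "J = mat n n (\<lambda>(i,j). if i + j = n - 1 then 1 else (0::real))"
  define Ta where "Ta = mat n N (\<lambda>(i,j). Q $$ (i, j + n))"
  define Tb where "Tb = mat N N (\<lambda>(i,j). zcoeff t (int (i + n) - int j))"
  have Qblock: "Q = four_block_mat J Ta (0\<^sub>m N n) Tb"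
  proof (rule eq_matI)
    fix i j assume ij: "i < dim_row (four_block_mat J Ta (0\<^sub>m N n) Tb)" "j < dim_col (four_block_mat J Ta (0\<^sub>m N n) Tb)"
    then have ij': "i < n + N" "j < n + N" by (auto simp: J_def Tb_def)
    show "Q $$ (i, j) = four_block_mat J Ta (0\<^sub>m N n) Tb $$ (i, j)"
      using ij ij' by (auto simp: Q_def P_def J_def Ta_def Tb_def L_def)
  qed (auto simp: Q_def J_def Tb_def)
  have detQ: "det Q = det J * det Tb"
    unfolding Qblock
    by (subst det_four_block_mat_lower_left_zero[of _ n _ N]) (auto simp: J_def Ta_def Tb_def)
  have detJ: "det J = (-1)^(n choose 2)"
  proof -
    have "J = mat n n (\<lambda>(i,j). (1\<^sub>m n :: real mat) $$ (i, n - 1 - j))"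
      by (rule eq_matI) (auto simp: J_def)
    then show ?thesis using det_rev_cols[of "1\<^sub>m n :: real mat" n] by simp
  qed
  have detTb: "det Tb = (-1)^(N choose 2) * det G"
  proof -
    have "Tb = mat N N (\<lambda>(i,j). G $$ (i, N - 1 - j))"
      by (rule eq_matI) (auto simp: Tb_def G_def n_def intro!: arg_cong[where f="zcoeff t"])
    then show ?thesis using det_rev_cols[OF Gc] by simp
  qed
  have "det H = det S * det P" using detSP det_mult[OF Sc Pc] by simp
  also have "\<dots> = (-1) ^ (n * N + (n choose 2) + (N choose 2)) * det G"
    using detS detP detQ detJ detTb by (simp add: power_add)
  also have "(-1::real) ^ (n * N + (n choose 2) + (N choose 2)) = (-1) ^ (N + ((M + 1) choose 2))"
    unfolding n_def by (rule sign_eq)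
  finally show ?thesis unfolding H_def G_def n_def t_def .
qed

end
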